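(* Let $\mathbb{V}$ be a finite-dimensional real inner product space with inner product $\langle\cdot,\cdot\rangle$, let $\mathcal{C}\subseteq\mathbb{V}$ be a convex set, let $\mathcal{F}:\mathcal{C}\to\mathbb{V}$ be a map, and let $f:\mathcal{C}\to\mathbb{R}$ be defined by $f(x)=\langle x,\mathcal{F}(x)\rangle$. Suppose that $$\langle x,\mathcal{F}(x)-\mathcal{F}(y)\rangle\ge 0\qquad\text{for all }x,y\in\mathcal{C}.$$ Then $f$ is convex and $\mathcal{F}(x)\in\partial f(x)$ for all $x\in\mathcal{C}$.
   Context: For $x\in\mathcal{C}$, the subdifferential of $f$ at $x$ (relative to $\mathcal{C}$) is $\partial f(x)=\{g\in\mathbb{V}: f(y)\ge f(x)+\langle g,y-x\rangle \text{ for all } y\in\mathcal{C}\}$. *)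

theory Defs
  imports "HOL-Analysis.Analysis"
begin

definition subdifferential :: "'a::real_inner set \<Rightarrow> ('a \<Rightarrow> real) \<Rightarrow> 'a \<Rightarrow> 'a set" where
  "subdifferential C f x = {g. \<forall>y\<in>C. f y \<ge> f x + inner g (y - x)}"

end

theory Submission
  imports Defs
begin

theorem mainTheorem1:
  fixes C :: "'a::euclidean_space set" and F :: "'a \<Rightarrow> 'a" and f :: "'a \<Rightarrow> real"
  assumes "convex C"
    and "\<And>x. x \<in> C \<Longrightarrow> f x = inner x (F x)"
    and "\<And>x y. x \<in> C \<Longrightarrow> y \<in> C \<Longrightarrow> inner x (F x - F y) \<ge> 0"
  shows "convex_on C f \<and> (\<forall>x\<in>C. F x \<in> subdifferential C f x)"
proof
  have key: "inner y (F x) \<le> f y" if "x \<in> C" "y \<in> C" for x y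
    using assms(3)[OF that(2,1)] assms(2)[OF that(2)] by (simp add: inner_diff_right)
  show "convex_on C f"
  proof (rule convex_onI[OF _ assms(1)])
    fix t :: real and x y assume t: "t > 0" "t < 1" and xy: "x \<in> C" "y \<in> C"
    define z where "z = (1 - t) *\<^sub>R x + t *\<^sub>R y"
    have zC: "z \<in> C" unfolding z_def using assms(1) xy t by (simp add: convex_def)
    have "f z = inner z (F z)" using assms(2)[OF zC] .
    also have "\<dots> = (1 - t) * inner x (F z) + t * inner y (F z)"
      unfolding z_def by (simp add: inner_add_left)
    also have "\<dots> \<le> (1 - t) * f x + t * f y"
      using key[OF zC xy(1)] key[OF zC xy(2)] t
      by (intro add_mono mult_left_mono) auto
    finally show "f ((1 - t) *\<^sub>R x + t *\<^sub>R y) \<le> (1 - t) * f x + t * f y" unfolding z_def .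
  qed
  show "\<forall>x\<in>C. F x \<in> subdifferential C f x"
  proof (intro ballI)
    fix x assume x: "x \<in> C"
    show "F x \<in> subdifferential C f x"
      unfolding subdifferential_def
    proof (intro CollectI ballI)
      fix y assume y: "y \<in> C"
      have "f x + inner (F x) (y - x) = inner y (F x)"
        using assms(2)[OF x] by (simp add: inner_diff_right inner_commute)
      then show "f x + inner (F x) (y - x) \<le> f y" using key[OF x y] by simp
    qed
  qed
qed

end
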